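(* Let $k\ge 3$, let $H$ be a connected $k$-uniform hypergraph on vertex set $V$, and let $y$ and $x$ be the principal eigenvectors of $H$ and of $\partial^*H$, respectively. Put $\hat y=(y_v^k)_{v\in V}$ and $\hat x=(x_v^2)_{v\in V}$. Then \[ D(\hat y,\hat x):=\max_{v\in V}\,|y_v^k-x_v^2|\le \tfrac12 . \] Moreover, if $\Delta_k:=\sup_{H} D(\hat y,\hat x)$, the supremum taken over all connected $k$-uniform hypergraphs $H$, then $\lim_{k\to\infty}\Delta_k=\tfrac12$.
   Context: For a connected $k$-uniform hypergraph $H=([n],E)$, writing $x^e=\prod_{v\in e}x_v$, its principal eigenvector is the unique strictly positive $y$ with $\|y\|_k=1$ and $\rho\, y_i^{k-1}=\sum_{e\ni i}y^{e\setminus\{i\}}$ for all $i$, where $\rho=\max_{\|z\|_k^k=1}k\sum_{e\in E}z^e$. The clique-shadow $\partial^*H$ is the multigraph on $[n]$ in which $\{u,v\}$ has multiplicity $\mu(uv)=|\{e\in E:u,v\in e\}|$; its principal eigenvector is the positive Perron eigenvector of its adjacency matrix (entries $\mu(uv)$), normalized to unit $2$-norm. *)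

theory Defs
  imports Complex_Main
begin

definition uniform_hypergraph :: "nat \<Rightarrow> nat \<Rightarrow> nat set set \<Rightarrow> bool" where
  "uniform_hypergraph k n E \<longleftrightarrow> (\<forall>e\<in>E. e \<subseteq> {..<n} \<and> card e = k)"

definition hg_connected :: "nat \<Rightarrow> nat set set \<Rightarrow> bool" where
  "hg_connected n E \<longleftrightarrow>
     (\<forall>u<n. \<forall>v<n. (u, v) \<in> {(a, b). \<exists>e\<in>E. a \<in> e \<and> b \<in> e}\<^sup>*)"

text \<open>rho = max over ||z||_k^k = 1 of k * sum_e z^e (the max is attained; written as Sup).\<close>
definition hg_spectral_radius :: "nat \<Rightarrow> nat \<Rightarrow> nat set set \<Rightarrow> real" where
  "hg_spectral_radius k n E =
     Sup {real k * (\<Sum>e\<in>E. \<Prod>v\<in>e. z v) | z :: nat \<Rightarrow> real. (\<Sum>i<n. \<bar>z i\<bar> ^ k) = 1}"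

definition hg_principal_eigvec :: "nat \<Rightarrow> nat \<Rightarrow> nat set set \<Rightarrow> (nat \<Rightarrow> real) \<Rightarrow> bool" where
  "hg_principal_eigvec k n E y \<longleftrightarrow>
     (\<forall>i<n. y i > 0) \<and> (\<Sum>i<n. y i ^ k) = 1 \<and>
     (\<forall>i<n. hg_spectral_radius k n E * y i ^ (k - 1)
              = (\<Sum>e\<in>{e\<in>E. i \<in> e}. \<Prod>v\<in>e - {i}. y v))"

text \<open>Edge multiplicity of the clique-shadow multigraph (no loops).\<close>
definition shadow_mult :: "nat set set \<Rightarrow> nat \<Rightarrow> nat \<Rightarrow> real" where
  "shadow_mult E u v = (if u = v then 0 else real (card {e\<in>E. u \<in> e \<and> v \<in> e}))"

definition shadow_principal_eigvec :: "nat \<Rightarrow> nat set set \<Rightarrow> (nat \<Rightarrow> real) \<Rightarrow> bool" where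
  "shadow_principal_eigvec n E x \<longleftrightarrow>
     (\<forall>i<n. x i > 0) \<and> (\<Sum>i<n. x i ^ 2) = 1 \<and>
     (\<exists>lam. \<forall>i<n. (\<Sum>j<n. shadow_mult E i j * x j) = lam * x i)"

definition eigvec_dist :: "nat \<Rightarrow> nat \<Rightarrow> (nat \<Rightarrow> real) \<Rightarrow> (nat \<Rightarrow> real) \<Rightarrow> real" where
  "eigvec_dist k n y x = Max ((\<lambda>v. \<bar>y v ^ k - x v ^ 2\<bar>) ` {..<n})"

definition Delta :: "nat \<Rightarrow> real" where
  "Delta k = Sup {eigvec_dist k n y x | n E y x.
       uniform_hypergraph k n E \<and> hg_connected n E \<and>
       hg_principal_eigvec k n E y \<and> shadow_principal_eigvec n E x}"

end

theory Submission
  imports Defs "HOL-Analysis.Analysis"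
begin


lemma uh_finite: "uniform_hypergraph k n E \<Longrightarrow> finite E"
  unfolding uniform_hypergraph_def
  by (rule finite_subset[of E "Pow {..<n}"]) auto

lemma amgm_k:
  fixes w :: "nat \<Rightarrow> real"
  assumes "finite S" "card S = k" "k > 0" "\<And>i. i \<in> S \<Longrightarrow> w i \<ge> 0"
  shows "(\<Prod>i\<in>S. w i) \<le> (\<Sum>i\<in>S. w i ^ k) / k"
proof -
  have ne: "S \<noteq> {}" using assms by auto
  have "(\<Prod>i \<in> S. w i ^ k) powr (1 / card S) \<le> (\<Sum>i \<in> S. w i ^ k / card S)"
    by (rule arith_geom_mean) (use assms ne in auto)
  moreover have "(\<Prod>i \<in> S. w i ^ k) = (\<Prod>i\<in>S. w i) ^ k" by (simp add: prod_power_distrib)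
  moreover have "(\<Prod>i\<in>S. w i) \<ge> 0" using assms by (simp add: prod_nonneg)
  moreover have "\<And>a::real. a \<ge> 0 \<Longrightarrow> (a ^ k) powr (1 / k) = a"
  proof -
    fix a :: real assume a: "a \<ge> 0"
    show "(a ^ k) powr (1 / k) = a"
    proof (cases "a = 0")
      case True thus ?thesis using assms by simp
    next
      case False
      hence "a ^ k = a powr k" using a by (simp add: powr_realpow)
      thus ?thesis using assms False a by (simp add: powr_powr)
    qed
  qed
  ultimately have "(\<Prod>i\<in>S. w i) \<le> (\<Sum>i \<in> S. w i ^ k / k)"
    using assms by simp
  thus ?thesis by (simp add: sum_divide_distrib)
qed

lemma swap_edges:
  fixes n :: nat and E :: "nat set set" and f :: "nat \<Rightarrow> nat set \<Rightarrow> real"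
  assumes "finite E" "\<forall>e\<in>E. e \<subseteq> {..<n}"
  shows "(\<Sum>i<n. \<Sum>e\<in>{e\<in>E. i \<in> e}. f i e) = (\<Sum>e\<in>E. \<Sum>i\<in>e. f i e)"
proof -
  have "(\<Sum>i<n. \<Sum>e\<in>{e\<in>E. i \<in> e}. f i e) = (\<Sum>e\<in>E. \<Sum>i\<in>{i\<in>{..<n}. i \<in> e}. f i e)"
    using sum.swap_restrict[of "{..<n}" E f "\<lambda>i e. i \<in> e"] assms(1) by simp
  also have "\<dots> = (\<Sum>e\<in>E. \<Sum>i\<in>e. f i e)"
    by (rule sum.cong) (use assms in \<open>auto intro!: sum.cong\<close>)
  finally show ?thesis .
qed

lemma eig_facts:
  fixes y :: "nat \<Rightarrow> real"
  assumes U: "uniform_hypergraph k n E" and k: "k \<ge> 1"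
    and eq: "\<forall>i<n. r * y i ^ (k - 1) = (\<Sum>e\<in>{e\<in>E. i \<in> e}. \<Prod>v\<in>e - {i}. y v)"
  shows "\<forall>i<n. r * y i ^ k = (\<Sum>e\<in>{e\<in>E. i \<in> e}. \<Prod>v\<in>e. y v)"
    and "r * (\<Sum>i<n. y i ^ k) = real k * (\<Sum>e\<in>E. \<Prod>v\<in>e. y v)"
proof -
  have fE: "finite E" using U by (rule uh_finite)
  have EU: "\<forall>e\<in>E. e \<subseteq> {..<n} \<and> card e = k" using U unfolding uniform_hypergraph_def by auto
  have fe: "\<And>e. e \<in> E \<Longrightarrow> finite e" using EU k by (metis card.infinite not_one_le_zero)
  show A: "\<forall>i<n. r * y i ^ k = (\<Sum>e\<in>{e\<in>E. i \<in> e}. \<Prod>v\<in>e. y v)"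
  proof (intro allI impI)
    fix i assume i: "i < n"
    have "r * y i ^ k = y i * (r * y i ^ (k - 1))"
      using k by (metis (no_types, lifting) le_add_diff_inverse mult.left_commute power_add power_one_right)
    also have "\<dots> = (\<Sum>e\<in>{e\<in>E. i \<in> e}. y i * (\<Prod>v\<in>e - {i}. y v))"
      using eq i by (simp add: sum_distrib_left)
    also have "\<dots> = (\<Sum>e\<in>{e\<in>E. i \<in> e}. \<Prod>v\<in>e. y v)"
      by (rule sum.cong) (auto simp: fe prod.remove)
    finally show "r * y i ^ k = (\<Sum>e\<in>{e\<in>E. i \<in> e}. \<Prod>v\<in>e. y v)" .
  qed
  have "r * (\<Sum>i<n. y i ^ k) = (\<Sum>i<n. \<Sum>e\<in>{e\<in>E. i \<in> e}. \<Prod>v\<in>e. y v)"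
    using A by (simp add: sum_distrib_left)
  also have "\<dots> = (\<Sum>e\<in>E. \<Sum>i\<in>e. \<Prod>v\<in>e. y v)"
    by (rule swap_edges) (use fE EU in auto)
  also have "\<dots> = (\<Sum>e\<in>E. real k * (\<Prod>v\<in>e. y v))"
    using EU by simp
  also have "\<dots> = real k * (\<Sum>e\<in>E. \<Prod>v\<in>e. y v)"
    by (rule sum_distrib_left[symmetric])
  finally show "r * (\<Sum>i<n. y i ^ k) = real k * (\<Sum>e\<in>E. \<Prod>v\<in>e. y v)" .
qed

lemma spec_radius:
  fixes y :: "nat \<Rightarrow> real"
  assumes U: "uniform_hypergraph k n E" and k: "k \<ge> 1"
    and pos: "\<forall>i<n. y i > 0" and norm: "(\<Sum>i<n. y i ^ k) = 1"
    and eq: "\<forall>i<n. r * y i ^ (k - 1) = (\<Sum>e\<in>{e\<in>E. i \<in> e}. \<Prod>v\<in>e - {i}. y v)"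
  shows "hg_spectral_radius k n E = r"
proof -
  note F = eig_facts[OF U k eq]
  have fE: "finite E" using U by (rule uh_finite)
  have EU: "\<forall>e\<in>E. e \<subseteq> {..<n} \<and> card e = k" using U unfolding uniform_hypergraph_def by auto
  have fe: "\<And>e. e \<in> E \<Longrightarrow> finite e" using EU k by (metis card.infinite not_one_le_zero)
  have ye: "\<And>e v. e \<in> E \<Longrightarrow> v \<in> e \<Longrightarrow> y v > 0"
    by (meson EU lessThan_iff pos subsetD)
  have r: "r = real k * (\<Sum>e\<in>E. \<Prod>v\<in>e. y v)" using F(2) norm by simp
  let ?S = "{real k * (\<Sum>e\<in>E. \<Prod>v\<in>e. z v) | z :: nat \<Rightarrow> real. (\<Sum>i<n. \<bar>z i\<bar> ^ k) = 1}"
  have mem: "r \<in> ?S"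
  proof -
    have "(\<Sum>i<n. \<bar>y i\<bar> ^ k) = (\<Sum>i<n. y i ^ k)" using pos by (intro sum.cong) auto
    hence "(\<Sum>i<n. \<bar>y i\<bar> ^ k) = 1" using norm by simp
    thus ?thesis using r by blast
  qed
  have ub: "t \<le> r" if "t \<in> ?S" for t
  proof -
    obtain z where t: "t = real k * (\<Sum>e\<in>E. \<Prod>v\<in>e. z v)" and zn: "(\<Sum>i<n. \<bar>z i\<bar> ^ k) = 1"
      using \<open>t \<in> ?S\<close> by blast
    define w where "w i = \<bar>z i\<bar> / y i" for i
    have w0: "w i \<ge> 0" if "i < n" for i using pos that unfolding w_def by (simp add: less_imp_le)
    have each: "real k * (\<Prod>v\<in>e. z v) \<le> (\<Sum>v\<in>e. (\<Prod>u\<in>e. y u) * w v ^ k)" if e: "e \<in> E" for e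
    proof -
      have "(\<Prod>v\<in>e. z v) \<le> (\<Prod>v\<in>e. \<bar>z v\<bar>)"
        by (metis abs_ge_self abs_prod)
      also have "\<dots> = (\<Prod>v\<in>e. y v * w v)"
      proof (rule prod.cong)
        fix v assume "v \<in> e"
        hence "v < n" using EU e by auto
        hence "y v > 0" using pos by auto
        thus "\<bar>z v\<bar> = y v * w v" unfolding w_def by simp
      qed simp
      also have "\<dots> = (\<Prod>v\<in>e. y v) * (\<Prod>v\<in>e. w v)" by (simp add: prod.distrib)
      also have "\<dots> \<le> (\<Prod>v\<in>e. y v) * ((\<Sum>v\<in>e. w v ^ k) / k)"
      proof (rule mult_left_mono)
        show "(\<Prod>v\<in>e. w v) \<le> (\<Sum>v\<in>e. w v ^ k) / k"
          by (rule amgm_k) (use fe e EU k w0 in auto)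
        show "0 \<le> (\<Prod>v\<in>e. y v)" using ye e by (intro prod_nonneg) (auto simp: less_imp_le)
      qed
      finally show ?thesis using k by (simp add: sum_distrib_left field_simps)
    qed
    have "t \<le> (\<Sum>e\<in>E. \<Sum>v\<in>e. (\<Prod>u\<in>e. y u) * w v ^ k)"
      unfolding t sum_distrib_left by (rule sum_mono) (use each in auto)
    also have "\<dots> = (\<Sum>i<n. \<Sum>e\<in>{e\<in>E. i \<in> e}. (\<Prod>u\<in>e. y u) * w i ^ k)"
      by (rule swap_edges[symmetric]) (use fE EU in auto)
    also have "\<dots> = (\<Sum>i<n. w i ^ k * (r * y i ^ k))"
    proof (rule sum.cong)
      fix i assume "i \<in> {..<n}"
      hence "r * y i ^ k = (\<Sum>e\<in>{e\<in>E. i \<in> e}. \<Prod>v\<in>e. y v)" using F(1) by auto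
      thus "(\<Sum>e\<in>{e\<in>E. i \<in> e}. (\<Prod>u\<in>e. y u) * w i ^ k) = w i ^ k * (r * y i ^ k)"
        by (simp add: sum_distrib_right[symmetric] mult.commute)
    qed simp
    also have "\<dots> = (\<Sum>i<n. r * \<bar>z i\<bar> ^ k)"
      by (rule sum.cong) (use pos in \<open>auto simp: w_def power_divide\<close>)
    also have "\<dots> = r" using zn by (simp add: sum_distrib_left[symmetric])
    finally show ?thesis .
  qed
  show ?thesis unfolding hg_spectral_radius_def
    by (rule cSup_eq_maximum) (use mem ub in auto)
qed

lemma edge_at:
  assumes C: "hg_connected n E" and n: "n \<ge> 2" and v: "v < n"
  shows "\<exists>e\<in>E. v \<in> e"
proof -
  define u where "u = (if v = 0 then 1 else (0::nat))"
  have u: "u < n" "u \<noteq> v" using n v by (auto simp: u_def)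
  have "(v, u) \<in> {(a, b). \<exists>e\<in>E. a \<in> e \<and> b \<in> e}\<^sup>*"
    using C u v unfolding hg_connected_def by blast
  then show ?thesis
  proof (cases rule: converse_rtranclE)
    case base thus ?thesis using u by simp
  next
    case (step w) thus ?thesis by blast
  qed
qed

lemma y_bound:
  fixes y :: "nat \<Rightarrow> real"
  assumes U: "uniform_hypergraph k n E" and k: "k \<ge> 2"
    and Y: "hg_principal_eigvec k n E y" and ne: "E \<noteq> {}" and v: "v < n"
  shows "y v ^ k \<le> 1 / 2"
proof -
  define r where "r = hg_spectral_radius k n E"
  have pos: "\<forall>i<n. y i > 0" and norm: "(\<Sum>i<n. y i ^ k) = 1"
    and eq: "\<forall>i<n. r * y i ^ (k - 1) = (\<Sum>e\<in>{e\<in>E. i \<in> e}. \<Prod>v\<in>e - {i}. y v)"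
    using Y unfolding hg_principal_eigvec_def r_def by auto
  have k1: "k \<ge> 1" using k by simp
  note F = eig_facts[OF U k1 eq]
  have fE: "finite E" using U by (rule uh_finite)
  have EU: "\<forall>e\<in>E. e \<subseteq> {..<n} \<and> card e = k" using U unfolding uniform_hypergraph_def by auto
  have ye: "\<And>e v. e \<in> E \<Longrightarrow> v \<in> e \<Longrightarrow> y v > 0"
    by (meson EU lessThan_iff pos subsetD)
  define P where "P = (\<Sum>e\<in>E. \<Prod>v\<in>e. y v)"
  have Pp: "P > 0" unfolding P_def
    by (rule sum_pos) (use fE ne ye in \<open>auto intro!: prod_pos\<close>)
  have rP: "r = k * P" using F(2) norm P_def by simp
  have "r * y v ^ k = (\<Sum>e\<in>{e\<in>E. v \<in> e}. \<Prod>u\<in>e. y u)" using F(1) v by auto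
  also have "\<dots> \<le> P" unfolding P_def
    by (rule sum_mono2) (use fE ye in \<open>auto intro!: prod_nonneg simp: less_imp_le\<close>)
  finally have "k * P * y v ^ k \<le> P" using rP by simp
  hence "k * y v ^ k \<le> 1" using Pp
  proof -
    have "P * (k * y v ^ k) \<le> P * 1" using \<open>k * P * y v ^ k \<le> P\<close> by (simp add: algebra_simps)
    thus ?thesis using Pp by (simp add: mult_le_cancel_left)
  qed
  moreover have "y v ^ k \<ge> 0" using pos v by (simp add: less_imp_le)
  ultimately show ?thesis using k
  proof -
    have "2 * y v ^ k \<le> k * y v ^ k" using k \<open>y v ^ k \<ge> 0\<close> by (intro mult_right_mono) auto
    thus ?thesis using \<open>k * y v ^ k \<le> 1\<close> by simp
  qed
qed

lemma x_bound:
  fixes x :: "nat \<Rightarrow> real"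
  assumes U: "uniform_hypergraph k n E" and k: "k \<ge> 2" and C: "hg_connected n E"
    and n: "n \<ge> 2" and X: "shadow_principal_eigvec n E x" and v: "v < n"
  shows "x v ^ 2 \<le> 1 / 2"
proof -
  define A where "A = shadow_mult E"
  have fE: "finite E" using U by (rule uh_finite)
  have EU: "\<forall>e\<in>E. e \<subseteq> {..<n} \<and> card e = k" using U unfolding uniform_hypergraph_def by auto
  have A0: "A i i = 0" for i unfolding A_def shadow_mult_def by simp
  have As: "A i j = A j i" for i j unfolding A_def shadow_mult_def by (auto intro!: arg_cong[where f=card])
  have Ann: "A i j \<ge> 0" for i j unfolding A_def shadow_mult_def by simp
  have pos: "\<forall>i<n. x i > 0" and norm: "(\<Sum>i<n. x i ^ 2) = 1"
    using X unfolding shadow_principal_eigvec_def by auto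
  obtain lam where eq: "\<forall>i<n. (\<Sum>j<n. A i j * x j) = lam * x i"
    using X unfolding shadow_principal_eigvec_def A_def by auto
  have xv: "x v > 0" using pos v by auto
  have lpos: "lam > 0"
  proof -
    obtain e where e: "e \<in> E" "v \<in> e" using edge_at[OF C n v] by auto
    have fe: "finite e" using EU e k by (metis card.infinite not_numeral_le_zero)
    have "card (e - {v}) \<ge> 1" using EU e k fe by (simp add: card_Diff_singleton)
    hence "e - {v} \<noteq> {}" by (metis card.empty not_one_le_zero)
    then obtain w where w: "w \<in> e" "w \<noteq> v" by auto
    have wn: "w < n" using EU e w by auto
    have "1 \<le> card {e\<in>E. v \<in> e \<and> w \<in> e}"
    proof -
      have "e \<in> {e\<in>E. v \<in> e \<and> w \<in> e}" using e w by auto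
      moreover have "finite {e\<in>E. v \<in> e \<and> w \<in> e}" using fE by auto
      ultimately have "card {e\<in>E. v \<in> e \<and> w \<in> e} > 0" by (auto simp: card_gt_0_iff)
      thus ?thesis by simp
    qed
    hence Avw: "A v w \<ge> 1" unfolding A_def shadow_mult_def using w by simp
    have "A v w * x w \<le> (\<Sum>j<n. A v j * x j)"
      by (rule member_le_sum) (use wn pos Ann in \<open>auto intro!: mult_nonneg_nonneg simp: less_imp_le\<close>)
    moreover have "A v w * x w > 0" using Avw pos wn by simp
    ultimately have "lam * x v > 0" using eq v by simp
    thus ?thesis using xv by (simp add: zero_less_mult_iff)
  qed
  have sq: "(\<Sum>j<n. A v j ^ 2) \<le> lam ^ 2"
  proof -
    have "x v * (\<Sum>j<n. A v j ^ 2) = (\<Sum>j<n. A v j * (A j v * x v))"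
      by (simp add: sum_distrib_left power2_eq_square As algebra_simps)
    also have "\<dots> \<le> (\<Sum>j<n. A v j * (\<Sum>l<n. A j l * x l))"
    proof (rule sum_mono)
      fix j assume "j \<in> {..<n}"
      have "A j v * x v \<le> (\<Sum>l<n. A j l * x l)"
        by (rule member_le_sum) (use v pos Ann in \<open>auto intro!: mult_nonneg_nonneg simp: less_imp_le\<close>)
      thus "A v j * (A j v * x v) \<le> A v j * (\<Sum>l<n. A j l * x l)"
        using Ann by (rule mult_left_mono) 
    qed
    also have "\<dots> = (\<Sum>j<n. A v j * (lam * x j))"
      using eq by (intro sum.cong) auto
    also have "\<dots> = lam * (\<Sum>j<n. A v j * x j)"
      by (simp add: sum_distrib_left algebra_simps)
    also have "\<dots> = x v * lam ^ 2"
      using eq v by (simp add: power2_eq_square)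
    finally show ?thesis using xv by simp
  qed
  have "(lam * x v) ^ 2 = (\<Sum>j\<in>{..<n} - {v}. A v j * x j) ^ 2"
  proof -
    have "(\<Sum>j<n. A v j * x j) = A v v * x v + (\<Sum>j\<in>{..<n} - {v}. A v j * x j)"
      using v by (simp add: sum.remove)
    thus ?thesis using eq v A0 by simp
  qed
  also have "\<dots> \<le> (\<Sum>j\<in>{..<n} - {v}. (A v j)^2) * (\<Sum>j\<in>{..<n} - {v}. (x j)^2)"
    by (rule Cauchy_Schwarz_ineq_sum)
  also have "\<dots> \<le> lam ^ 2 * (1 - x v ^ 2)"
  proof (rule mult_mono)
    have "(\<Sum>j\<in>{..<n} - {v}. (A v j)^2) \<le> (\<Sum>j<n. A v j ^ 2)"
      by (rule sum_mono2) auto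
    thus "(\<Sum>j\<in>{..<n} - {v}. (A v j)^2) \<le> lam ^ 2" using sq by simp
    have "(\<Sum>j<n. x j ^ 2) = x v ^ 2 + (\<Sum>j\<in>{..<n} - {v}. x j ^ 2)"
      using v by (simp add: sum.remove)
    thus "(\<Sum>j\<in>{..<n} - {v}. (x j)^2) \<le> 1 - x v ^ 2" using norm by simp
    show "0 \<le> lam ^ 2" by simp
    show "0 \<le> (\<Sum>j\<in>{..<n} - {v}. (x j)^2)" by (simp add: sum_nonneg)
  qed
  finally have "lam ^ 2 * x v ^ 2 \<le> lam ^ 2 * (1 - x v ^ 2)" by (simp add: power_mult_distrib)
  hence "x v ^ 2 \<le> 1 - x v ^ 2" using lpos by simp
  thus ?thesis by simp
qed

lemma part1:
  fixes y x :: "nat \<Rightarrow> real"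
  assumes k: "k \<ge> 3" and U: "uniform_hypergraph k n E" and C: "hg_connected n E"
    and Y: "hg_principal_eigvec k n E y" and X: "shadow_principal_eigvec n E x"
  shows "eigvec_dist k n y x \<le> 1 / 2"
proof -
  have ny: "(\<Sum>i<n. y i ^ k) = 1" and yp: "\<forall>i<n. y i > 0"
    using Y unfolding hg_principal_eigvec_def by auto
  have nx: "(\<Sum>i<n. x i ^ 2) = 1" and xp: "\<forall>i<n. x i > 0"
    using X unfolding shadow_principal_eigvec_def by auto
  have n0: "n \<noteq> 0" using ny by (metis lessThan_0 sum.empty zero_neq_one)
  have bnd: "\<bar>y v ^ k - x v ^ 2\<bar> \<le> 1/2" if v: "v < n" for v
  proof (cases "n = 1")
    case True
    hence "y v ^ k = 1" "x v ^ 2 = 1" using ny nx v by auto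
    thus ?thesis by simp
  next
    case False
    hence n2: "n \<ge> 2" using n0 by simp
    have ne: "E \<noteq> {}" using edge_at[OF C n2 v] by auto
    have a: "y v ^ k \<le> 1/2" by (rule y_bound[OF U _ Y ne v]) (use k in simp)
    have b: "x v ^ 2 \<le> 1/2" by (rule x_bound[OF U _ C n2 X v]) (use k in simp)
    have "y v ^ k \<ge> 0" "x v ^ 2 \<ge> 0" using yp v by (auto simp: less_imp_le)
    thus ?thesis using a b by linarith
  qed
  show ?thesis unfolding eigvec_dist_def
    using n0 bnd by (subst Max_le_iff) auto
qed



definition sf_ed :: "nat \<Rightarrow> nat \<Rightarrow> nat set" where
  "sf_ed p i = insert 0 {1 + i * p ..< 1 + (i + 1) * p}"

lemma sf_mem: "v \<ge> 1 \<Longrightarrow> p > 0 \<Longrightarrow> v \<in> sf_ed p i \<longleftrightarrow> (v - 1) div p = i"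
proof -
  assume v: "v \<ge> 1" and p: "p > 0"
  have "v \<in> sf_ed p i \<longleftrightarrow> i * p \<le> v - 1 \<and> v - 1 < (i + 1) * p"
    using v unfolding sf_ed_def by auto
  also have "\<dots> \<longleftrightarrow> (v - 1) div p = i"
  proof
    assume h: "i * p \<le> v - 1 \<and> v - 1 < (i + 1) * p"
    show "(v - 1) div p = i"
      by (rule div_nat_eqI) (use h in \<open>simp_all add: mult.commute\<close>)
  next
    assume h: "(v - 1) div p = i"
    have "i * p \<le> v - 1" by (metis h div_times_less_eq_dividend)
    moreover have "v - 1 < (i + 1) * p"
      using div_less_iff_less_mult[OF p, of "v - 1" "i+1"] h by simp
    ultimately show "i * p \<le> v - 1 \<and> v - 1 < (i + 1) * p" using h by simp
  qed
  finally show ?thesis .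
qed

lemma sf_zero: "0 \<in> sf_ed p i" unfolding sf_ed_def by simp

lemma sf_card: "card (sf_ed p i) = p + 1"
  unfolding sf_ed_def by (simp add: card_insert_if)

lemma sf_sub: "i < m \<Longrightarrow> sf_ed p i \<subseteq> {..< 1 + m * p}"
proof -
  assume "i < m"
  hence "(i + 1) * p \<le> m * p" by (intro mult_right_mono) auto
  thus ?thesis unfolding sf_ed_def by auto
qed

lemma sf_inj: "p > 0 \<Longrightarrow> inj_on (sf_ed p) {..<m}"
proof (rule inj_onI)
  fix i j assume p: "p > 0" and eq: "sf_ed p i = sf_ed p j"
  have "1 + i * p \<in> sf_ed p i" unfolding sf_ed_def using p by simp
  hence "1 + i * p \<in> sf_ed p j" using eq by simp
  hence "(1 + i * p - 1) div p = j" using sf_mem[of "1 + i*p" p j] p by simp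
  thus "i = j" using p by simp
qed

lemma sf_pet: fixes v m p :: nat shows "1 \<le> v \<Longrightarrow> v < 1 + m * p \<Longrightarrow> p > 0 \<Longrightarrow> (v - 1) div p < m"
proof -
  assume a: "1 \<le> v" "v < 1 + m * p" "p > 0"
  hence "v - 1 < m * p" by linarith
  thus ?thesis using div_less_iff_less_mult[OF a(3), of "v - 1" m] by simp
qed

lemma sf_edges_at:
  assumes "1 \<le> v" "v < 1 + m * p" "p > 0"
  shows "{e\<in>sf_ed p ` {..<m}. v \<in> e} = {sf_ed p ((v - 1) div p)}"
  using sf_pet[OF assms] sf_mem[of v p] assms by auto

lemma sf_edges_0: "{e\<in>sf_ed p ` {..<m}. 0 \<in> e} = sf_ed p ` {..<m}"
  using sf_zero by auto

lemma sf_uniform: "p > 0 \<Longrightarrow> uniform_hypergraph (p + 1) (1 + m * p) (sf_ed p ` {..<m})"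
  unfolding uniform_hypergraph_def using sf_card sf_sub by auto

lemma sf_connected:
  assumes p: "p > 0" and m: "m > 0"
  shows "hg_connected (1 + m * p) (sf_ed p ` {..<m})"
proof -
  let ?R = "{(a, b). \<exists>e\<in>sf_ed p ` {..<m}. a \<in> e \<and> b \<in> e}"
  have to0: "(u, 0) \<in> ?R \<and> (0, u) \<in> ?R" if u: "u < 1 + m * p" for u
  proof (cases "u = 0")
    case True thus ?thesis using m sf_zero by blast
  next
    case False
    hence "u \<in> sf_ed p ((u - 1) div p)" using sf_mem[of u p] p by simp
    moreover have "(u - 1) div p < m" using sf_pet[of u m p] False u p by simp
    ultimately show ?thesis using sf_zero by blast
  qed
  show ?thesis unfolding hg_connected_def
  proof (intro allI impI)
    fix u v assume "u < 1 + m * p" "v < 1 + m * p"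
    hence "(u, 0) \<in> ?R" "(0, v) \<in> ?R" using to0 by auto
    thus "(u, v) \<in> ?R\<^sup>*" by (meson r_into_rtrancl rtrancl_trans)
  qed
qed

lemma sf_interval_no0: "0 \<notin> {1 + i * p ..< 1 + (i + 1) * (p::nat)}" by simp

lemma sf_arith: "0 < (m::nat) \<Longrightarrow> 1 / real (p + 1) + real (m * p) * (1 / real ((p + 1) * m)) = 1"
proof -
  assume m: "0 < m"
  have mm: "real m \<noteq> 0" using m by simp
  have e1: "real (m * p) = real p * real m" by simp
  have e2: "real ((p + 1) * m) = (real p + 1) * real m" by (simp add: algebra_simps)
  have e3: "real (p + 1) = real p + 1" by simp
  have "real (m * p) * (1 / real ((p + 1) * m)) = (real p * real m) / ((real p + 1) * real m)"
    unfolding e1 e2 by simp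
  also have "\<dots> = real p / (real p + 1)"
    using mm by (rule nonzero_mult_divide_mult_cancel_right)
  finally have "real (m * p) * (1 / real ((p + 1) * m)) = real p / (real p + 1)" .
  moreover have "1 / (real p + 1) + real p / (real p + 1) = 1"
    by (simp add: add_divide_distrib[symmetric])
  ultimately show ?thesis unfolding e3 by simp
qed

lemma sf_arith2: "0 < (m::nat) \<Longrightarrow> real m * (1 / real ((p + 1) * m)) = 1 / real (p + 1)"
proof -
  assume m: "0 < m"
  have mm: "real m \<noteq> 0" using m by simp
  have e2: "real ((p + 1) * m) = (real p + 1) * real m" by (simp add: algebra_simps)
  have e3: "real (p + 1) = real p + 1" by simp
  have "real m * (1 / real ((p + 1) * m)) = (1 * real m) / ((real p + 1) * real m)"
    unfolding e2 by simp
  also have "\<dots> = 1 / (real p + 1)"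
    using mm by (rule nonzero_mult_divide_mult_cancel_right)
  finally show ?thesis unfolding e3 .
qed

lemma sf_y:
  fixes p m :: nat and a b :: real
  assumes p: "p \<ge> 2" and m: "m > 0" and a: "a > 0" "a ^ (p + 1) = 1 / (p + 1)"
    and b: "b > 0" "b ^ (p + 1) = 1 / ((p + 1) * m)"
  shows "hg_principal_eigvec (p + 1) (1 + m * p) (sf_ed p ` {..<m}) (\<lambda>v. if v = 0 then a else b)"
proof -
  define n where "n = 1 + m * p"
  define E where "E = sf_ed p ` {..<m}"
  define y where "y = (\<lambda>v::nat. if v = 0 then a else b)"
  have p0: "p > 0" using p by simp
  have U: "uniform_hypergraph (p + 1) n E" unfolding n_def E_def by (rule sf_uniform[OF p0])
  have pos: "\<forall>i<n. y i > 0" using a b by (simp add: y_def)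
  have norm: "(\<Sum>i<n. y i ^ (p + 1)) = 1"
  proof -
    have "(\<Sum>i<n. y i ^ (p + 1)) = y 0 ^ (p + 1) + (\<Sum>i\<in>{..<n} - {0}. y i ^ (p + 1))"
      by (rule sum.remove) (auto simp: n_def)
    also have "(\<Sum>i\<in>{..<n} - {0}. y i ^ (p + 1)) = (\<Sum>i\<in>{..<n} - {0}. b ^ (p + 1))"
      by (rule sum.cong) (auto simp: y_def)
    also have "\<dots> = (n - 1) * b ^ (p + 1)" using n_def by simp
    finally have "(\<Sum>i<n. y i ^ (p + 1)) = a ^ (p + 1) + real (m * p) * b ^ (p + 1)"
      using n_def by (simp add: y_def)
    also have "\<dots> = 1 / (p + 1) + real (m * p) * (1 / ((p + 1) * m))" by (simp only: a(2) b(2))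
    also have "\<dots> = 1" using m by (rule sf_arith)
    finally show ?thesis .
  qed
  define r where "r = a / b"
  have eq: "\<forall>i<n. r * y i ^ (p + 1 - 1) = (\<Sum>e\<in>{e\<in>E. i \<in> e}. \<Prod>v\<in>e - {i}. y v)"
  proof (intro allI impI)
    fix i assume i: "i < n"
    show "r * y i ^ (p + 1 - 1) = (\<Sum>e\<in>{e\<in>E. i \<in> e}. \<Prod>v\<in>e - {i}. y v)"
    proof (cases "i = 0")
      case True
      have "(\<Sum>e\<in>{e\<in>E. i \<in> e}. \<Prod>v\<in>e - {i}. y v) = (\<Sum>e\<in>E. \<Prod>v\<in>e - {0}. y v)"
        using True sf_edges_0 E_def by simp
      also have "\<dots> = (\<Sum>j<m. \<Prod>v\<in>sf_ed p j - {0}. y v)"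
        unfolding E_def by (rule sum.reindex_cong[OF sf_inj[OF p0]]) auto
      also have "\<dots> = (\<Sum>j<m. b ^ p)"
      proof (rule sum.cong)
        fix j assume "j \<in> {..<m}"
        have "sf_ed p j - {0} = {1 + j * p ..< 1 + (j + 1) * p}" unfolding sf_ed_def by auto
        hence "(\<Prod>v\<in>sf_ed p j - {0}. y v) = (\<Prod>v\<in>{1 + j * p ..< 1 + (j + 1) * p}. b)"
          by (intro prod.cong) (auto simp: y_def)
        thus "(\<Prod>v\<in>sf_ed p j - {0}. y v) = b ^ p" by simp
      qed simp
      also have "\<dots> = m * b ^ p" by simp
      finally have R: "(\<Sum>e\<in>{e\<in>E. i \<in> e}. \<Prod>v\<in>e - {i}. y v) = m * b ^ p" .
      have "r * y i ^ (p + 1 - 1) = a ^ (p + 1) / b" using True by (simp add: r_def y_def)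
      also have "\<dots> = m * b ^ (p + 1) / b"
      proof -
        have "a ^ (p + 1) = m * b ^ (p + 1)" unfolding a(2) b(2) using sf_arith2[OF m] by simp
        thus ?thesis by simp
      qed
      also have "\<dots> = m * b ^ p" using b(1) by simp
      finally show ?thesis using R by simp
    next
      case False
      define j where "j = (i - 1) div p"
      have i1: "1 \<le> i" "i < 1 + m * p" using False i n_def by auto
      have "{e\<in>E. i \<in> e} = {sf_ed p j}" unfolding E_def j_def by (rule sf_edges_at[OF i1 p0])
      hence "(\<Sum>e\<in>{e\<in>E. i \<in> e}. \<Prod>v\<in>e - {i}. y v) = (\<Prod>v\<in>sf_ed p j - {i}. y v)" by simp
      also have "sf_ed p j - {i} = insert 0 ({1 + j * p ..< 1 + (j + 1) * p} - {i})"
        unfolding sf_ed_def using False by auto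
      also have "(\<Prod>v\<in>insert 0 ({1 + j * p ..< 1 + (j + 1) * p} - {i}). y v)
          = a * (\<Prod>v\<in>{1 + j * p ..< 1 + (j + 1) * p} - {i}. b)"
        by (subst prod.insert) (auto simp: y_def intro!: prod.cong)
      also have "\<dots> = a * b ^ (p - 1)"
      proof -
        have "i \<in> sf_ed p j" using sf_mem[of i p j] i1 p0 j_def by simp
        hence "i \<in> {1 + j * p ..< 1 + (j + 1) * p}" using False unfolding sf_ed_def by auto
        thus ?thesis by simp
      qed
      finally have R: "(\<Sum>e\<in>{e\<in>E. i \<in> e}. \<Prod>v\<in>e - {i}. y v) = a * b ^ (p - 1)" .
      have "r * y i ^ (p + 1 - 1) = a / b * b ^ p" using False by (simp add: r_def y_def)
      also have "\<dots> = a * b ^ (p - 1)"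
      proof -
        have "b ^ p = b * b ^ (p - 1)" using p by (metis Suc_pred' not_numeral_le_zero neq0_conv power_Suc)
        thus ?thesis using b(1) by simp
      qed
      finally show ?thesis using R by simp
    qed
  qed
  have k1: "p + 1 \<ge> 1" by simp
  have rad: "hg_spectral_radius (p + 1) n E = r"
    by (rule spec_radius[OF U k1 pos norm eq])
  show ?thesis
    unfolding hg_principal_eigvec_def using pos norm eq rad
    by (simp add: n_def E_def y_def)
qed

lemma sf_x:
  fixes p m :: nat and c N lam :: real
  assumes p: "p \<ge> 2" and m: "m > 0" and c: "c > 0" and N: "N > 0"
    and h1: "c ^ 2 + m * p = N ^ 2" and h2: "lam * c = m * p" and h3: "c + (real p - 1) = lam"
  shows "shadow_principal_eigvec (1 + m * p) (sf_ed p ` {..<m}) (\<lambda>v. if v = 0 then c / N else 1 / N)"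
proof -
  define n where "n = 1 + m * p"
  define E where "E = sf_ed p ` {..<m}"
  define x where "x = (\<lambda>v::nat. if v = 0 then c / N else 1 / N)"
  have p0: "p > 0" using p by simp
  have pos: "\<forall>i<n. x i > 0" using c N by (simp add: x_def)
  have norm: "(\<Sum>i<n. x i ^ 2) = 1"
  proof -
    have "(\<Sum>i<n. x i ^ 2) = x 0 ^ 2 + (\<Sum>i\<in>{..<n} - {0}. x i ^ 2)"
      by (rule sum.remove) (auto simp: n_def)
    also have "(\<Sum>i\<in>{..<n} - {0}. x i ^ 2) = (\<Sum>i\<in>{..<n} - {0}. (1 / N) ^ 2)"
      by (rule sum.cong) (auto simp: x_def)
    also have "\<dots> = real (m * p) * (1 / N) ^ 2" using n_def by simp
    finally have "(\<Sum>i<n. x i ^ 2) = (c ^ 2 + m * p) / N ^ 2"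
      by (simp add: x_def power_divide add_divide_distrib)
    thus ?thesis using h1 N by simp
  qed
  have eq: "\<forall>i<n. (\<Sum>j<n. shadow_mult E i j * x j) = lam * x i"
  proof (intro allI impI)
    fix i assume i: "i < n"
    show "(\<Sum>j<n. shadow_mult E i j * x j) = lam * x i"
    proof (cases "i = 0")
      case True
      have "(\<Sum>j<n. shadow_mult E i j * x j) = (\<Sum>j<n. (if j \<in> {..<n} - {0} then 1 / N else 0))"
      proof (rule sum.cong)
        fix j assume j: "j \<in> {..<n}"
        show "shadow_mult E i j * x j = (if j \<in> {..<n} - {0} then 1 / N else 0)"
        proof (cases "j = 0")
          case False
          have "{e\<in>E. i \<in> e \<and> j \<in> e} = {e\<in>E. j \<in> e}" using True sf_zero E_def by auto
          also have "\<dots> = {sf_ed p ((j - 1) div p)}"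
            unfolding E_def by (rule sf_edges_at) (use False j n_def p0 in auto)
          finally show ?thesis using True False j unfolding shadow_mult_def x_def by simp
        qed (use True in \<open>simp add: shadow_mult_def\<close>)
      qed simp
      also have "\<dots> = (\<Sum>j\<in>{..<n} \<inter> ({..<n} - {0}). 1 / N)"
        by (rule sum.inter_restrict[where g = "\<lambda>_. 1 / N", symmetric]) simp
      also have "\<dots> = (\<Sum>j\<in>{..<n} - {0}. 1 / N)"
        by (metis Int_Diff Int_absorb)
      also have "\<dots> = real (m * p) / N" by (simp add: n_def)
      also have "\<dots> = lam * x i" using True h2 N by (simp add: x_def)
      finally show ?thesis .
    next
      case False
      define q where "q = (i - 1) div p"
      have i1: "1 \<le> i" "i < 1 + m * p" using False i n_def by auto
      have Ei: "{e\<in>E. i \<in> e} = {sf_ed p q}" unfolding E_def q_def by (rule sf_edges_at[OF i1 p0])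
      have qm: "q < m" unfolding q_def by (rule sf_pet[OF i1 p0])
      have S: "sf_ed p q - {i} \<subseteq> {..<n}" using sf_sub[OF qm, of p] n_def by auto
      have "(\<Sum>j<n. shadow_mult E i j * x j) = (\<Sum>j<n. (if j \<in> sf_ed p q - {i} then x j else 0))"
      proof (rule sum.cong)
        fix j assume j: "j \<in> {..<n}"
        have "{e\<in>E. i \<in> e \<and> j \<in> e} = {e\<in>{e\<in>E. i \<in> e}. j \<in> e}" by auto
        also have "\<dots> = (if j \<in> sf_ed p q then {sf_ed p q} else {})" using Ei by auto
        finally show "shadow_mult E i j * x j = (if j \<in> sf_ed p q - {i} then x j else 0)"
          unfolding shadow_mult_def by auto
      qed simp
      also have "\<dots> = (\<Sum>j\<in>{..<n} \<inter> (sf_ed p q - {i}). x j)"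
        by (rule sum.inter_restrict[symmetric]) simp
      also have "\<dots> = (\<Sum>j\<in>sf_ed p q - {i}. x j)"
        using S by (metis Int_absorb1)
      also have "sf_ed p q - {i} = insert 0 ({1 + q * p ..< 1 + (q + 1) * p} - {i})"
        unfolding sf_ed_def using False by auto
      also have "(\<Sum>j\<in>insert 0 ({1 + q * p ..< 1 + (q + 1) * p} - {i}). x j)
          = c / N + (\<Sum>j\<in>{1 + q * p ..< 1 + (q + 1) * p} - {i}. 1 / N)"
        by (subst sum.insert) (auto simp: x_def intro!: sum.cong)
      also have "\<dots> = c / N + (real p - 1) / N"
      proof -
        have "i \<in> sf_ed p q" using sf_mem[of i p q] i1 p0 q_def by simp
        hence "i \<in> {1 + q * p ..< 1 + (q + 1) * p}" using False unfolding sf_ed_def by auto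
        thus ?thesis using p by (simp add: of_nat_diff)
      qed
      also have "\<dots> = (c + (real p - 1)) / N" by (simp add: add_divide_distrib)
      also have "\<dots> = lam * x i" using False h3 by (simp add: x_def)
      finally show ?thesis .
    qed
  qed
  show ?thesis unfolding shadow_principal_eigvec_def
    using pos norm eq by (auto simp: n_def E_def x_def)
qed


lemma ineq: fixes K :: real assumes K: "K \<ge> 3"
  shows "1/2 - 2/K \<le> ((K-1)^2+1) / (((K-1)^2+1) + K*(K-1)) - 1/K"
proof -
  have pos: "((K-1)^2+1) + K*(K-1) > 0" using K by (smt (verit) mult_pos_pos zero_le_power2)
  have "(K - 2) * (((K-1)^2+1) + K*(K-1)) \<le> 2 * K * ((K-1)^2+1)"
  proof -
    have aux: "K * 4 \<le> K * (K * 3)" using K by (intro mult_left_mono) auto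
    show ?thesis using aux by (simp add: power2_eq_square algebra_simps)
  qed
  hence "(K - 2) / (2 * K) \<le> ((K-1)^2+1) / (((K-1)^2+1) + K*(K-1))"
    using pos K by (simp add: divide_simps mult.commute)
  moreover have "(K - 2) / (2 * K) = 1/2 - 1/K" using K by (simp add: field_simps)
  moreover have "1/K \<ge> 0" using K by simp
  ultimately show ?thesis by linarith
qed
lemma Delta_p:
  fixes p :: nat assumes p: "p \<ge> 2"
  shows "1/2 - 2 / real (p + 1) \<le> Delta (p + 1) \<and> Delta (p + 1) \<le> 1/2"
proof -
  define k where "k = p + 1"
  define m where "m = k * (p^2 + 1)"
  define n where "n = 1 + m * p"
  define E where "E = sf_ed p ` {..<m}"
  define a where "a = root k (1 / k)"
  define b where "b = root k (1 / (k * m))"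
  define y where "y = (\<lambda>v::nat. if v = 0 then a else b)"
  define c where "c = real (p^2 + 1)"
  define lam where "lam = real (p * (p + 1))"
  define N where "N = sqrt (c^2 + m * p)"
  define x where "x = (\<lambda>v::nat. if v = 0 then c / N else 1 / N)"
  have k3: "k \<ge> 3" using p k_def by simp
  have m0: "m > 0" unfolding m_def k_def by simp
  have p0: "p > 0" using p by simp
  have a0: "a > 0" unfolding a_def using k3 by simp
  have "a ^ k = 1 / real k" unfolding a_def using k3 by (intro real_root_pow_pos2) auto
  hence ak: "a ^ (p + 1) = 1 / (p + 1)" unfolding k_def by simp
  have b0: "b > 0" unfolding b_def using k3 m0 by simp
  have "b ^ k = 1 / real (k * m)" unfolding b_def using k3 by (intro real_root_pow_pos2) auto
  hence bk: "b ^ (p + 1) = 1 / ((p + 1) * m)" unfolding k_def by simp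
  have c0: "c > 0" unfolding c_def by (simp add: add_pos_nonneg)
  have N0: "N > 0" unfolding N_def using c0 by (simp add: add_pos_nonneg)
  have h1: "c ^ 2 + m * p = N ^ 2" unfolding N_def using c0 by (simp add: add_pos_nonneg less_imp_le)
  have h2: "lam * c = m * p" unfolding lam_def c_def m_def k_def by (simp add: algebra_simps)
  have h3: "c + (real p - 1) = lam" unfolding lam_def c_def by (simp add: algebra_simps power2_eq_square)
  have U: "uniform_hypergraph k n E" unfolding k_def n_def E_def by (rule sf_uniform[OF p0])
  have C: "hg_connected n E" unfolding n_def E_def by (rule sf_connected[OF p0 m0])
  have Y: "hg_principal_eigvec k n E y" unfolding k_def n_def E_def y_def by (rule sf_y[OF p m0 a0 ak b0 bk])
  have X: "shadow_principal_eigvec n E x" unfolding n_def E_def x_def by (rule sf_x[OF p m0 c0 N0 h1 h2 h3])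
  define S where "S = {eigvec_dist k n y x | n E y x.
       uniform_hypergraph k n E \<and> hg_connected n E \<and>
       hg_principal_eigvec k n E y \<and> shadow_principal_eigvec n E x}"
  have DS: "Delta k = Sup S" unfolding Delta_def S_def by simp
  have mem: "eigvec_dist k n y x \<in> S" unfolding S_def using U C Y X by blast
  have ub: "\<forall>t\<in>S. t \<le> 1/2" unfolding S_def using part1 k3 by blast
  have bdd: "bdd_above S" unfolding bdd_above_def using ub by blast
  have le: "eigvec_dist k n y x \<le> Delta k" unfolding DS by (rule cSup_upper[OF mem bdd])
  have up: "Delta k \<le> 1/2" unfolding DS by (rule cSup_least) (use mem ub in auto)
  have "\<bar>y 0 ^ k - x 0 ^ 2\<bar> \<le> eigvec_dist k n y x"
    unfolding eigvec_dist_def by (rule Max_ge) (auto simp: n_def)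
  moreover have "y 0 ^ k = 1 / real k" using ak by (simp add: y_def k_def)
  moreover have "x 0 ^ 2 = c / (c + lam)"
  proof -
    have "x 0 ^ 2 = c ^ 2 / N ^ 2" by (simp add: x_def power_divide)
    also have "\<dots> = c ^ 2 / (c * (c + lam))" using h1 h2 by (simp add: algebra_simps power2_eq_square)
    also have "\<dots> = c / (c + lam)" using c0 by (simp add: power2_eq_square)
    finally show ?thesis .
  qed
  moreover have "1/2 - 2 / real k \<le> c / (c + lam) - 1 / real k"
  proof -
    have "c = (real k - 1)^2 + 1" unfolding c_def k_def by simp
    moreover have "lam = real k * (real k - 1)" unfolding lam_def k_def by (simp add: algebra_simps)
    ultimately show ?thesis using ineq[of "real k"] k3 by simp
  qed
  ultimately have "1/2 - 2 / real k \<le> Delta k" using le by linarith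
  thus ?thesis using up k_def by simp
qed


theorem theorem6p1:
  fixes k n :: nat and E :: "nat set set" and y x :: "nat \<Rightarrow> real"
  assumes "k \<ge> 3"
    and "uniform_hypergraph k n E" and "hg_connected n E"
    and "hg_principal_eigvec k n E y" and "shadow_principal_eigvec n E x"
  shows "eigvec_dist k n y x \<le> 1 / 2 \<and> (Delta \<longlongrightarrow> 1 / 2) sequentially"
proof
  show "eigvec_dist k n y x \<le> 1 / 2" by (rule part1[OF assms])
  have ev: "\<forall>\<^sub>F j in sequentially. 1/2 - 2 / real j \<le> Delta j \<and> Delta j \<le> 1/2"
  proof (rule eventually_sequentiallyI[of 3])
    fix j :: nat assume j: "j \<ge> 3"
    have "j = (j - 1) + 1" using j by simp
    moreover have "j - 1 \<ge> 2" using j by simp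
    ultimately show "1/2 - 2 / real j \<le> Delta j \<and> Delta j \<le> 1/2"
      using Delta_p[of "j - 1"] by metis
  qed
  have lim: "(\<lambda>j. 1/2 - 2 / real j) \<longlonglongrightarrow> 1/2"
    using tendsto_diff[OF tendsto_const[of "1/2::real"] lim_const_over_n[of "2::real"]] by simp
  show "(Delta \<longlongrightarrow> 1 / 2) sequentially"
    by (rule tendsto_sandwich[OF _ _ lim tendsto_const]) (use ev in \<open>auto elim: eventually_mono\<close>)
qed

end
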